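(* Let $\mu_1\ge\mu_2$ be positive integers and let $n\ge \mu_1+\mu_2$ be an integer. Put $j=\mu_2+1$ and $k=\mu_1-\mu_2+1$. Then the total number of standard Young tableaux of skew shape $\lambda/(\mu_1,\mu_2)$, summed over all partitions $\lambda$ of $n$ having at most three parts (and containing $(\mu_1,\mu_2)$), filled with the numbers $1,2,\ldots,n-(\mu_1+\mu_2)$, equals \[\sum_i r_{i,j,k}\,M_{i+n-(\mu_1+\mu_2)},\] where $M_m$ is the $m$th Motzkin number and $r_{i,j,k}$ is the coefficient of $x^i$ in the polynomial \[r_{j,k}(x)=r_j(x)r_k(x)-r_{j-1}(x)r_{k-1}(x),\] the polynomials $r_m(x)$ being defined by $r_0(x)=0$ and \[\sum_{m=1}^\infty r_m(x)y^m=\frac{y}{(1-y)\big(1+(1-x)y+y^2\big)}.\]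
   Context: A partition $\lambda=(\lambda_1,\ldots,\lambda_l)$ of $n$ is a weakly decreasing sequence of positive integers summing to $n$; its parts are the $\lambda_i$. For partitions $\mu\subset\lambda$ (i.e. $\mu_i\le\lambda_i$ for all $i$), a standard Young tableau of skew shape $\lambda/\mu$ is a filling of the boxes of the Young diagram of $\lambda$ not in the Young diagram of $\mu$ with the numbers $1,2,\ldots,|\lambda|-|\mu|$, each used once, so that entries increase from left to right along rows and from top to bottom down columns. The Motzkin numbers are $M_m=\sum_{t=0}^{\lfloor m/2\rfloor}\frac{m!}{t!(t+1)!(m-2t)!}$, with generating function $\sum_{m\ge0}M_mx^m=\frac{1-x-\sqrt{1-2x-3x^2}}{2x^2}$. Equivalently, $r_{j,k}(x)$ is the coefficient of $y^jz^k$ in $\frac{yz(1-yz)}{(1-y)(1+(1-x)y+y^2)(1-z)(1+(1-x)z+z^2)}$. *)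

theory Defs
  imports Main "HOL-Computational_Algebra.Polynomial" "HOL-Computational_Algebra.Formal_Power_Series"
begin

definition is_partition :: "nat list \<Rightarrow> nat \<Rightarrow> bool" where
  "is_partition lam n \<longleftrightarrow> sorted_wrt (\<ge>) lam \<and> (\<forall>x\<in>set lam. 0 < x) \<and> sum_list lam = n"

definition part_contains :: "nat list \<Rightarrow> nat list \<Rightarrow> bool" where
  "part_contains lam mu \<longleftrightarrow> length mu \<le> length lam \<and> (\<forall>i<length mu. mu ! i \<le> lam ! i)"

(* boxes (row, column), 0-indexed *)
definition young_diagram :: "nat list \<Rightarrow> (nat \<times> nat) set" where
  "young_diagram lam = {(i, j). i < length lam \<and> j < lam ! i}"

definition skew_diagram :: "nat list \<Rightarrow> nat list \<Rightarrow> (nat \<times> nat) set" where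
  "skew_diagram lam mu = young_diagram lam - young_diagram mu"

definition skew_SYT :: "nat list \<Rightarrow> nat list \<Rightarrow> ((nat \<times> nat) \<Rightarrow> nat) set" where
  "skew_SYT lam mu = {T.
     bij_betw T (skew_diagram lam mu) {1..card (skew_diagram lam mu)} \<and>
     (\<forall>b. b \<notin> skew_diagram lam mu \<longrightarrow> T b = 0) \<and>
     (\<forall>i j j'. (i, j) \<in> skew_diagram lam mu \<and> (i, j') \<in> skew_diagram lam mu \<and> j < j'
        \<longrightarrow> T (i, j) < T (i, j')) \<and>
     (\<forall>i i' j. (i, j) \<in> skew_diagram lam mu \<and> (i', j) \<in> skew_diagram lam mu \<and> i < i'
        \<longrightarrow> T (i, j) < T (i', j))}"

definition motzkin :: "nat \<Rightarrow> nat" where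
  "motzkin m = (\<Sum>t\<le>m div 2. fact m div (fact t * fact (t + 1) * fact (m - 2 * t)))"

(* denominator (1-y)(1+(1-x)y+y^2) as a power series in y over Z[x] *)
definition r_denom :: "int poly fps" where
  "r_denom = (1 - fps_X) * (1 + fps_const (1 - [:0, 1:]) * fps_X + fps_X ^ 2)"

definition r_poly :: "nat \<Rightarrow> int poly" where
  "r_poly m = fps_nth (fps_X * fps_right_inverse r_denom 1) m"

definition r2_poly :: "nat \<Rightarrow> nat \<Rightarrow> int poly" where
  "r2_poly j k = r_poly j * r_poly k - r_poly (j - 1) * r_poly (k - 1)"

end

theory Submission
  imports Defs "HOL-Library.FuncSet"
begin

unbundle fps_syntax



definition xX :: "int poly" where "xX = [:0, 1:]"

lemma r_denom_alt: "r_denom = 1 - fps_const xX * fps_X + fps_const xX * fps_X^2 - fps_X^3"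
proof -
  have e: "fps_const (1 - [:0,1:]) = 1 - fps_const xX" by (metis fps_const_1_eq_1 fps_const_sub xX_def)
  have g: "\<And>X C :: int poly fps. (1 - X) * (1 + (1 - C) * X + X^2) = 1 - C * X + C * X^2 - X^3"
    by (simp add: algebra_simps power2_eq_square power3_eq_cube)
  show ?thesis unfolding r_denom_def e g ..
qed

definition FF :: "int poly fps" where "FF = fps_X * fps_right_inverse r_denom 1"

lemma r_poly_FF: "r_poly m = FF $ m" by (simp add: r_poly_def FF_def)

lemma denomFF: "r_denom * FF = fps_X"
proof -
  have "r_denom $ 0 * 1 = 1" by (simp add: r_denom_def)
  hence "r_denom * fps_right_inverse r_denom 1 = 1" by (rule fps_right_inverse)
  thus ?thesis unfolding FF_def by (metis mult.left_commute mult.right_neutral)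
qed

lemma denomFF_exp: "r_denom * FF = FF - fps_const xX * (fps_X^1 * FF) + fps_const xX * (fps_X^2 * FF) - fps_X^3 * FF"
proof -
  have g: "\<And>F C X :: int poly fps. (1 - C * X + C * X^2 - X^3) * F = F - C * (X^1 * F) + C * (X^2 * F) - X^3 * F"
    by (simp add: algebra_simps)
  show ?thesis unfolding r_denom_alt by (rule g)
qed

lemma denom_nth: "(r_denom * FF) $ n = FF $ n - xX * (if n < 1 then 0 else FF $ (n - 1))
   + xX * (if n < 2 then 0 else FF $ (n-2)) - (if n < 3 then 0 else FF $ (n-3))"
  unfolding denomFF_exp by (simp only: fps_sub_nth fps_add_nth fps_mult_left_const_nth fps_X_power_mult_nth)

lemma FF_rec4: "FF $ Suc (Suc (Suc n)) - xX * FF $ Suc (Suc n) + xX * FF $ Suc n - FF $ n = 0"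
proof -
  have "(r_denom * FF) $ Suc (Suc (Suc n)) = 0" by (simp add: denomFF)
  thus ?thesis unfolding denom_nth by simp
qed

lemma FF0: "FF $ 0 = 0" by (simp add: FF_def)
lemma FF1: "FF $ Suc 0 = 1" by (simp add: FF_def)
lemma FF2: "FF $ 2 = xX"
proof -
  have "(r_denom * FF) $ 2 = 0" by (simp add: denomFF)
  hence "FF $ 2 - xX * FF $ 1 + xX * FF $ 0 = 0" unfolding denom_nth by simp
  hence "FF $ 2 - xX * 1 + xX * 0 = 0" using FF0 FF1 by simp
  thus ?thesis by (simp only: mult_1_right mult_zero_right add_0_right diff_eq_eq add_0_left)
qed

lemma gen_step: fixes x a0 a1 a2 a3 :: "'a::comm_ring_1"
  assumes "a3 - x * a2 + x * a1 - a0 = 0" "a2 = (x - 1) * a1 - a0 + 1"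
  shows "a3 = (x - 1) * a2 - a1 + 1"
proof -
  have h: "a3 = x * a2 - x * a1 + a0" using assms(1) by (simp add: algebra_simps)
  have e: "x * a2 - x * a1 + a0 = (x - 1) * a2 - a1 + 1 + (a2 - ((x - 1) * a1 - a0 + 1))"
    by (simp add: left_diff_distrib right_diff_distrib diff_add_eq add_diff_eq diff_diff_eq2)
  have z: "a2 - ((x - 1) * a1 - a0 + 1) = 0" by (simp only: assms(2) diff_self)
  show ?thesis unfolding h e z by simp
qed

lemma FF_rec3: "FF $ Suc (Suc m) = (xX - 1) * FF $ Suc m - FF $ m + 1"
proof (induction m)
  case 0
  have "FF $ Suc (Suc 0) = xX" using FF2 by (simp add: numeral_2_eq_2)
  then show ?case by (simp add: FF0 FF1)
next
  case (Suc m)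
  show ?case by (rule gen_step[OF FF_rec4[of m] Suc])
qed

abbreviation "rp \<equiv> r_poly"

lemma rp0: "rp 0 = 0" by (simp add: r_poly_FF FF0)
lemma rp1: "rp (Suc 0) = 1" by (simp add: r_poly_FF FF1)
lemma rp_rec: "rp (Suc a) = (xX - 1) * rp a - rp (a - 1) + 1"
proof (cases a)
  case 0 then show ?thesis by (simp add: rp0 rp1)
next
  case (Suc b)
  then show ?thesis unfolding r_poly_FF by (simp only: FF_rec3 diff_Suc_1)
qed

lemma gen_ident: fixes X u0 u1 u2 u3 v0 v1 v2 v3 :: "'a::comm_ring_1"
  assumes "u3 = (X - 1) * u2 - u1 + 1" "u2 = (X - 1) * u1 - u0 + 1"
          "v3 = (X - 1) * v2 - v1 + 1" "v2 = (X - 1) * v1 - v0 + 1"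
  shows "X * (u2 * v2 - u1 * v1) = (u2 * v3 - u1 * v2) + (u3 * v1 - u2 * v0) + (u1 * v2 - u0 * v1)"
proof -
  have a: "u0 = (X - 1) * u1 - u2 + 1" using assms(2) by (simp add: algebra_simps)
  have b: "v0 = (X - 1) * v1 - v2 + 1" using assms(4) by (simp add: algebra_simps)
  show ?thesis unfolding a b assms(1) assms(3)
    by (simp add: algebra_simps)
qed

lemma r2_rec: "xX * r2_poly (Suc b) (Suc a) =
   r2_poly (Suc b) (Suc (Suc a)) + r2_poly (Suc (Suc b)) a + r2_poly b (Suc a)"
  unfolding r2_poly_def diff_Suc_1 by (rule gen_ident[OF rp_rec[of "Suc b", unfolded diff_Suc_1] rp_rec[of b] rp_rec[of "Suc a", unfolded diff_Suc_1] rp_rec[of a]])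

lemma r2_zero1: "r2_poly j 0 = 0" by (simp add: r2_poly_def rp0)
lemma r2_zero2: "r2_poly 0 k = 0" by (simp add: r2_poly_def rp0)

definition qp :: "nat \<Rightarrow> int poly" where "qp h = rp (Suc h) - rp h"

lemma qp0: "qp 0 = 1" by (simp add: qp_def rp0 rp1)

lemma gen_q: fixes X u0 u1 u2 u3 :: "'a::comm_ring_1"
  assumes "u3 = (X - 1) * u2 - u1 + 1" "u2 = (X - 1) * u1 - u0 + 1"
  shows "X * (u2 - u1) = (u3 - u2) + (u2 - u1) + (u1 - u0)"
proof -
  have a: "u0 = (X - 1) * u1 - u2 + 1" using assms(2) by (simp add: algebra_simps)
  show ?thesis unfolding a assms(1)
    by (simp add: algebra_simps)
qed

lemma qp_rec: "xX * qp h = qp (Suc h) + qp h + (if h = 0 then 0 else qp (h - 1))"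
proof -
  have "xX * qp h = qp (Suc h) + qp h + (rp h - rp (h - 1))"
    unfolding qp_def by (rule gen_q[OF rp_rec[of "Suc h", unfolded diff_Suc_1] rp_rec[of h]])
  moreover have "rp h - rp (h - 1) = (if h = 0 then 0 else qp (h - 1))"
    by (cases h) (simp_all add: qp_def)
  ultimately show ?thesis by simp
qed

lemma rp_sum: "rp m = (\<Sum>h<m. qp h)"
  unfolding qp_def by (subst sum_lessThan_telescope) (simp add: rp0)


lemma xX_mult: "xX * p = pCons 0 p" by (simp add: xX_def)

definition Lm :: "nat \<Rightarrow> int poly \<Rightarrow> int" where
  "Lm m p = (\<Sum>i\<le>degree p. coeff p i * int (motzkin (i + m)))"

lemma Lm_le: "degree p \<le> N \<Longrightarrow> Lm m p = (\<Sum>i\<le>N. coeff p i * int (motzkin (i + m)))"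
  unfolding Lm_def by (rule sum.mono_neutral_left) (auto simp: coeff_eq_0)

lemma Lm_add: "Lm m (p + q) = Lm m p + Lm m q"
proof -
  define N where "N = max (degree p) (degree q)"
  have "degree (p + q) \<le> N" unfolding N_def by (rule degree_add_le) auto
  hence "Lm m (p + q) = (\<Sum>i\<le>N. coeff (p + q) i * int (motzkin (i + m)))" by (rule Lm_le)
  also have "\<dots> = (\<Sum>i\<le>N. coeff p i * int (motzkin (i + m))) + (\<Sum>i\<le>N. coeff q i * int (motzkin (i + m)))"
    by (simp add: sum.distrib distrib_right)
  also have "\<dots> = Lm m p + Lm m q"
    by (subst (1 2) Lm_le[of _ N]) (auto simp: N_def)
  finally show ?thesis .
qed

lemma Lm_uminus: "Lm m (- p) = - Lm m p"
  unfolding Lm_def by (simp add: sum_negf)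

lemma Lm_diff: "Lm m (p - q) = Lm m p - Lm m q"
  using Lm_add[of m p "- q"] by (simp add: Lm_uminus)

lemma Lm_zero: "Lm m 0 = 0" by (simp add: Lm_def)

lemma Lm_sum: "Lm m (sum f A) = (\<Sum>a\<in>A. Lm m (f a))"
proof (cases "finite A")
  case True then show ?thesis by (induction A rule: finite_induct) (simp_all add: Lm_zero Lm_add)
next
  case False then show ?thesis by (simp add: Lm_zero)
qed

lemma Lm_1: "Lm m 1 = int (motzkin m)" by (simp add: Lm_def)

lemma Lm_X: "Lm m (xX * p) = Lm (Suc m) p"
proof -
  have "degree (pCons 0 p) \<le> Suc (degree p)" by (rule degree_pCons_le)
  hence "Lm m (pCons 0 p) = (\<Sum>i\<le>Suc (degree p). coeff (pCons 0 p) i * int (motzkin (i + m)))" by (rule Lm_le)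
  also have "\<dots> = (\<Sum>i\<le>degree p. coeff p i * int (motzkin (i + Suc m)))"
    by (subst sum.atMost_Suc_shift) simp
  finally show ?thesis by (simp add: xX_mult Lm_def)
qed


fun dd :: "nat \<Rightarrow> nat \<Rightarrow> int" where
  "dd 0 h = (if h = 0 then 1 else 0)"
| "dd (Suc n) h = dd n (Suc h) + (if h = 0 then 0 else dd n (h - 1))"

definition cc :: "nat \<Rightarrow> nat \<Rightarrow> int" where
  "cc m h = (\<Sum>n\<le>m. int (m choose n) * dd n h)"

lemma cc0: "cc 0 h = (if h = 0 then 1 else 0)" by (simp add: cc_def)

lemma cc_rec: "cc (Suc m) h = cc m (Suc h) + cc m h + (if h = 0 then 0 else cc m (h - 1))"
proof -
  have "cc (Suc m) h = dd 0 h + (\<Sum>n\<le>m. int (Suc m choose Suc n) * dd (Suc n) h)"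
    unfolding cc_def by (subst sum.atMost_Suc_shift) simp
  also have "\<dots> = (dd 0 h + (\<Sum>n\<le>m. int (m choose Suc n) * dd (Suc n) h)) + (\<Sum>n\<le>m. int (m choose n) * dd (Suc n) h)"
    by (simp add: sum.distrib distrib_right)
  also have "dd 0 h + (\<Sum>n\<le>m. int (m choose Suc n) * dd (Suc n) h) = (\<Sum>n\<le>Suc m. int (m choose n) * dd n h)"
    by (subst sum.atMost_Suc_shift) simp
  also have "\<dots> = cc m h" unfolding cc_def by simp
  also have "(\<Sum>n\<le>m. int (m choose n) * dd (Suc n) h) = cc m (Suc h) + (if h = 0 then 0 else cc m (h - 1))"
    unfolding cc_def by (simp add: sum.distrib distrib_left)
  finally show ?thesis by simp
qed

definition cb :: "nat \<Rightarrow> int \<Rightarrow> int" where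
  "cb n k = (if k < 0 then 0 else int (n choose nat k))"

lemma cb_pascal: "cb (Suc n) k = cb n k + cb n (k - 1)"
proof (cases "k \<le> 0")
  case True then show ?thesis by (cases "k = 0") (auto simp: cb_def)
next
  case False
  define j where "j = nat (k - 1)"
  have j: "k = int (Suc j)" using False unfolding j_def by simp
  have e: "nat (1 + int j) = Suc j" by (simp add: nat_add_distrib)
  show ?thesis unfolding j by (simp add: cb_def e)
qed

lemma cb_sym: assumes "int (Suc n) = 2 * j" shows "cb n j = cb n (j - 1)"
proof -
  have j1: "j \<ge> 1" using assms by linarith
  define t where "t = nat (j - 1)"
  have t: "j = int (Suc t)" using j1 unfolding t_def by simp
  have n: "n = 2 * t + 1" using assms t by linarith
  have "n choose Suc t = n choose (n - Suc t)" by (rule binomial_symmetric) (simp add: n)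
  also have "n - Suc t = t" by (simp add: n)
  finally have "n choose Suc t = n choose t" .
  moreover have e: "nat (1 + int t) = Suc t" by (simp add: nat_add_distrib)
  ultimately show ?thesis using t by (simp add: cb_def e)
qed

lemma dd_odd: "odd (n + h) \<Longrightarrow> dd n h = 0"
proof (induction n arbitrary: h)
  case 0 then show ?case by (cases h) auto
next
  case (Suc n) then show ?case by (cases h) auto
qed

lemma dd_closed: "even (n + h) \<Longrightarrow> dd n h = cb n ((int n - int h) div 2) - cb n ((int n - int h) div 2 - 1)"
proof (induction n arbitrary: h)
  case 0
  then show ?case
  proof (cases "h = 0")
    case True then show ?thesis by (simp add: cb_def)
  next
    case False
    with 0 have "h \<ge> 2" by (auto elim!: evenE)
    hence "(int 0 - int h) div 2 < 0" by linarith
    then show ?thesis using False by (simp add: cb_def)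
  qed
next
  case (Suc n)
  have ev0: "even (int (Suc n + h))" using Suc.prems by simp
  hence ev: "even (int (Suc n) - int h)" by (simp add: even_diff)
  define j where "j = (int (Suc n) - int h) div 2"
  have j: "int (Suc n) - int h = 2 * j" unfolding j_def using ev by (simp add: even_two_times_div_two)
  have k: "(int (Suc n) - int h) div 2 = j" using j by simp
  have A: "dd n (Suc h) = cb n (j - 1) - cb n (j - 1 - 1)"
  proof -
    have "even (n + Suc h)" using Suc.prems by simp
    moreover have "(int n - int (Suc h)) div 2 = j - 1" using j by linarith
    ultimately show ?thesis using Suc.IH by simp
  qed
  show ?case
  proof (cases "h = 0")
    case True
    have "dd (Suc n) h = cb n (j - 1) - cb n (j - 1 - 1)" using A True by simp
    moreover have "cb n j = cb n (j - 1)" using j True by (intro cb_sym) simp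
    ultimately show ?thesis unfolding k cb_pascal by simp
  next
    case False
    have B: "dd n (h - 1) = cb n j - cb n (j - 1)"
    proof -
      have "even (n + (h - 1))" using Suc.prems False by (cases h) auto
      moreover have "(int n - int (h - 1)) div 2 = j" using j False by linarith
      ultimately show ?thesis using Suc.IH by simp
    qed
    show ?thesis unfolding k cb_pascal using A B False by simp
  qed
qed


definition EE :: "nat \<Rightarrow> int" where "EE t = cb (2*t) (int t) - cb (2*t) (int t - 1)"

lemma dd_even0: "dd (2*t) 0 = EE t"
  using dd_closed[of "2*t" 0] by (simp add: EE_def)

lemma EE_fact: "EE t * int (fact t * fact (Suc t)) = int (fact (2*t))"
proof (cases t)
  case 0 then show ?thesis by (simp add: EE_def cb_def)
next
  case (Suc s)
  have c1: "EE t = int (2*t choose t) - int (2*t choose s)"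
  proof -
    have "int t - 1 = int s" using Suc by simp
    then show ?thesis unfolding EE_def cb_def by simp
  qed
  have f1: "fact t * fact (2*t - t) * (2*t choose t) = (fact (2*t) :: nat)" by (rule binomial_fact_lemma) simp
  have f2: "fact s * fact (2*t - s) * (2*t choose s) = (fact (2*t) :: nat)" by (rule binomial_fact_lemma) (simp add: Suc)
  have e2: "2*t - s = Suc t" using Suc by simp
  have ft: "fact t = t * (fact s :: nat)" using Suc by simp
  have fSt: "fact (Suc t) = Suc t * (fact t :: nat)" by simp
  have "EE t * int (fact t * fact (Suc t)) =
      int (Suc t) * int (fact t * fact t * (2*t choose t)) - int t * int (fact s * fact (Suc t) * (2*t choose s))"
    unfolding c1 fSt ft by (simp add: algebra_simps)
  also have "\<dots> = int (Suc t) * int (fact (2*t)) - int t * int (fact (2*t))"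
    using f1 f2 e2 by simp
  also have "\<dots> = int (fact (2*t))" by (simp add: algebra_simps)
  finally show ?thesis .
qed

lemma sum_even: fixes m :: nat assumes "\<And>n. odd n \<Longrightarrow> f n = (0::int)"
  shows "(\<Sum>n\<le>m. f n) = (\<Sum>t\<le>m div 2. f (2*t))"
proof -
  have "(\<Sum>n\<le>m. f n) = (\<Sum>n\<in>(\<lambda>t. 2*t) ` {..m div 2}. f n)"
  proof (rule sum.mono_neutral_right)
    show "finite {..m}" by simp
    show "(\<lambda>t. 2*t) ` {..m div 2} \<subseteq> {..m}" by auto
    show "\<forall>i\<in>{..m} - (\<lambda>t. 2*t) ` {..m div 2}. f i = 0"
    proof
      fix i assume i: "i \<in> {..m} - (\<lambda>t. 2*t) ` {..m div 2}"
      have "odd i"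
      proof
        assume "even i"
        then have "i = 2 * (i div 2)" by simp
        moreover have "i div 2 \<le> m div 2" using i by (simp add: div_le_mono)
        ultimately show False using i by blast
      qed
      then show "f i = 0" by (rule assms)
    qed
  qed
  also have "\<dots> = (\<Sum>t\<le>m div 2. f (2*t))" by (subst sum.reindex) (auto simp: inj_on_def)
  finally show ?thesis .
qed

lemma term_eq: assumes "2*t \<le> m"
  shows "int (m choose (2*t)) * EE t = int (fact m div (fact t * fact (t + 1) * fact (m - 2 * t)))"
proof -
  define D :: nat where "D = fact t * fact (t + 1) * fact (m - 2 * t)"
  have "D > 0" unfolding D_def by (simp del: fact_Suc)
  hence Dpos: "int D \<noteq> 0" by simp
  have "fact (2*t) * fact (m - 2*t) * (m choose (2*t)) = (fact m :: nat)" by (rule binomial_fact_lemma) (rule assms)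
  hence "int (fact m) = int (fact (2*t)) * int (fact (m - 2*t)) * int (m choose (2*t))"
    by (metis of_nat_mult)
  also have "\<dots> = (int (m choose (2*t)) * EE t) * int D"
    unfolding EE_fact[symmetric] D_def by (simp add: algebra_simps)
  finally have eq: "int (fact m) = (int (m choose (2*t)) * EE t) * int D" .
  have "int (fact m div D) = int (fact m) div int D" by (rule zdiv_int)
  also have "\<dots> = ((int (m choose (2*t)) * EE t) * int D) div int D" unfolding eq ..
  also have "\<dots> = int (m choose (2*t)) * EE t" by (rule nonzero_mult_div_cancel_right[OF Dpos])
  finally have "int (fact m div D) = int (m choose (2*t)) * EE t" .
  thus ?thesis unfolding D_def by simp
qed

lemma cc_motzkin: "cc m 0 = int (motzkin m)"
proof -
  have "cc m 0 = (\<Sum>t\<le>m div 2. int (m choose (2*t)) * dd (2*t) 0)"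
    unfolding cc_def by (rule sum_even) (simp add: dd_odd)
  also have "\<dots> = (\<Sum>t\<le>m div 2. int (fact m div (fact t * fact (t + 1) * fact (m - 2 * t))))"
    by (rule sum.cong) (auto simp: dd_even0 term_eq)
  also have "\<dots> = int (motzkin m)" by (simp add: motzkin_def)
  finally show ?thesis .
qed

lemma Lm_qp: "Lm m (qp h) = cc m h"
proof (induction h arbitrary: m rule: less_induct)
  case (less h)
  show ?case
  proof (cases h)
    case 0 then show ?thesis by (simp add: qp0 Lm_1 cc_motzkin)
  next
    case (Suc g)
    have "Lm m (qp (Suc g)) = Lm m (xX * qp g) - Lm m (qp g) - Lm m (if g = 0 then 0 else qp (g - 1))"
      unfolding qp_rec[of g] by (simp add: Lm_add Lm_diff)
    also have "\<dots> = cc (Suc m) g - cc m g - (if g = 0 then 0 else cc m (g - 1))"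
      using less Suc by (simp add: Lm_X Lm_zero)
    also have "\<dots> = cc m (Suc g)" by (simp add: cc_rec)
    finally show ?thesis using Suc by simp
  qed
qed

lemma Lm0_qp: "Lm 0 (qp h) = (if h = 0 then 1 else 0)"
  by (simp add: Lm_qp cc0)


definition prevq :: "nat \<Rightarrow> int poly" where "prevq h = (if h = 0 then 0 else qp (h - 1))"

lemma qp_rec': "xX * qp h = qp (Suc h) + qp h + prevq h"
  unfolding prevq_def by (rule qp_rec)

lemma gen_orth: fixes X s u p w s' p' :: "'a::comm_ring_1"
  assumes "X * u = s + u + p" "X * w = s' + w + p'"
  shows "s * w = u * s' + u * p' - p * w"
proof -
  have sd: "s = X * u - u - p" using assms(1) by (simp add: algebra_simps)
  have "s * w = (X * u - u - p) * w" unfolding sd ..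
  also have "\<dots> = u * (X * w) - u * w - p * w" by (simp add: algebra_simps)
  also have "\<dots> = u * s' + u * p' - p * w" unfolding assms(2) by (simp add: algebra_simps)
  finally show ?thesis .
qed

lemma qp_Suc_mult: "qp (Suc a) * qp b = qp a * qp (Suc b) + qp a * prevq b - prevq a * qp b"
  by (rule gen_orth[OF qp_rec' qp_rec'])

lemma orth: "Lm 0 (qp a * qp b) = (if a = b then 1 else 0)"
proof (induction a arbitrary: b rule: less_induct)
  case (less a)
  show ?case
  proof (cases a)
    case 0 then show ?thesis by (simp add: qp0 Lm0_qp)
  next
    case (Suc c)
    have IHc: "\<And>b. Lm 0 (qp c * qp b) = (if c = b then 1 else 0)" using less Suc by simp
    have IHp: "\<And>b. Lm 0 (prevq c * qp b) = (if c \<noteq> 0 \<and> c - 1 = b then 1 else 0)"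
    proof -
      fix b show "Lm 0 (prevq c * qp b) = (if c \<noteq> 0 \<and> c - 1 = b then 1 else 0)"
      proof (cases c)
        case 0 then show ?thesis by (simp add: prevq_def Lm_zero)
      next
        case (Suc e) then show ?thesis using less \<open>a = Suc c\<close> by (simp add: prevq_def)
      qed
    qed
    have IHc': "Lm 0 (qp c * prevq b) = (if b \<noteq> 0 \<and> c = b - 1 then 1 else 0)"
      by (cases b) (simp_all add: prevq_def Lm_zero IHc)
    have "Lm 0 (qp a * qp b) = Lm 0 (qp c * qp (Suc b)) + Lm 0 (qp c * prevq b) - Lm 0 (prevq c * qp b)"
      unfolding Suc qp_Suc_mult by (simp add: Lm_add Lm_diff)
    also have "\<dots> = (if a = b then 1 else 0)"
      unfolding IHc IHc' IHp using Suc by auto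
    finally show ?thesis .
  qed
qed

lemma Lm_rr: "Lm 0 (rp j * rp k) = int (min j k)"
proof -
  have "Lm 0 (rp j * rp k) = (\<Sum>a<j. \<Sum>b<k. Lm 0 (qp a * qp b))"
    unfolding rp_sum sum_product by (simp add: Lm_sum)
  also have "\<dots> = (\<Sum>a<j. if a < k then 1 else 0)"
    by (rule sum.cong) (simp_all add: orth)
  also have "\<dots> = int (min j k)"
    by (induction j) auto
  finally show ?thesis .
qed

lemma Lm_r2: "Lm 0 (r2_poly (Suc b) (Suc a)) = 1"
  unfolding r2_poly_def by (simp add: Lm_diff Lm_rr)


definition syt :: "(nat \<times> nat) set \<Rightarrow> ((nat \<times> nat) \<Rightarrow> nat) set" where
  "syt S = {T.
     bij_betw T S {1..card S} \<and>
     (\<forall>b. b \<notin> S \<longrightarrow> T b = 0) \<and>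
     (\<forall>i j j'. (i, j) \<in> S \<and> (i, j') \<in> S \<and> j < j' \<longrightarrow> T (i, j) < T (i, j')) \<and>
     (\<forall>i i' j. (i, j) \<in> S \<and> (i', j) \<in> S \<and> i < i' \<longrightarrow> T (i, j) < T (i', j))}"

lemma skew_SYT_syt: "skew_SYT lam mu = syt (skew_diagram lam mu)"
  by (simp add: skew_SYT_def syt_def)

definition minb :: "(nat \<times> nat) set \<Rightarrow> nat \<times> nat \<Rightarrow> bool" where
  "minb S c \<longleftrightarrow> c \<in> S \<and> (\<forall>j'. (fst c, j') \<in> S \<longrightarrow> \<not> j' < snd c) \<and> (\<forall>i'. (i', snd c) \<in> S \<longrightarrow> \<not> i' < fst c)"

lemma syt_finite: assumes "finite S" shows "finite (syt S)"
proof -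
  have "syt S \<subseteq> (\<lambda>f b. if b \<in> S then f b else 0) ` (S \<rightarrow>\<^sub>E {0..card S})"
  proof
    fix T assume T: "T \<in> syt S"
    hence bij: "bij_betw T S {1..card S}" and z: "\<forall>b. b \<notin> S \<longrightarrow> T b = 0" by (auto simp: syt_def)
    have "T = (\<lambda>b. if b \<in> S then restrict T S b else 0)" using z by auto
    moreover have "restrict T S \<in> S \<rightarrow>\<^sub>E {0..card S}" using bij by (auto simp: bij_betw_def)
    ultimately show "T \<in> (\<lambda>f b. if b \<in> S then f b else 0) ` (S \<rightarrow>\<^sub>E {0..card S})" by blast
  qed
  moreover have "finite (S \<rightarrow>\<^sub>E {0..card S})" using assms by (intro finite_PiE) auto
  ultimately show ?thesis using finite_subset finite_imageI by blast
qed

lemma syt_empty: "syt {} = {\<lambda>_. 0}"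
  by (auto simp: syt_def bij_betw_def)

lemma card_syt_empty: "card (syt {}) = 1"
  by (simp add: syt_empty)

lemma syt_one_exists:
  assumes T: "T \<in> syt S" and fin: "finite S" and ne: "S \<noteq> {}"
  shows "\<exists>c. minb S c \<and> T c = 1"
proof -
  have bij: "bij_betw T S {1..card S}" using T by (simp add: syt_def)
  have row: "\<And>i j j'. (i, j) \<in> S \<Longrightarrow> (i, j') \<in> S \<Longrightarrow> j < j' \<Longrightarrow> T (i, j) < T (i, j')"
    using T by (simp add: syt_def)
  have col: "\<And>i i' j. (i, j) \<in> S \<Longrightarrow> (i', j) \<in> S \<Longrightarrow> i < i' \<Longrightarrow> T (i, j) < T (i', j)"
    using T by (simp add: syt_def)
  have "card S \<ge> 1" using fin ne by (simp add: Suc_le_eq card_gt_0_iff)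
  hence "1 \<in> T ` S" using bij by (auto simp: bij_betw_def)
  then obtain c where c: "c \<in> S" "T c = 1" by auto
  have pos: "\<And>b. b \<in> S \<Longrightarrow> T b \<ge> 1" using bij by (auto simp: bij_betw_def)
  obtain i j where ij: "c = (i, j)" by (cases c)
  have "minb S c"
    unfolding minb_def
  proof (intro conjI allI impI)
    show "c \<in> S" by fact
    fix j' assume "(fst c, j') \<in> S"
    show "\<not> j' < snd c"
    proof
      assume "j' < snd c"
      hence "j' < j" using ij by simp
      moreover have "(i, j') \<in> S" "(i, j) \<in> S" using \<open>(fst c, j') \<in> S\<close> c ij by auto
      ultimately have "T (i, j') < T (i, j)" by (intro row)
      thus False using c ij pos[OF \<open>(i, j') \<in> S\<close>] by simp
    qed
  next
    fix i' assume "(i', snd c) \<in> S"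
    show "\<not> i' < fst c"
    proof
      assume "i' < fst c"
      hence "i' < i" using ij by simp
      moreover have "(i', j) \<in> S" "(i, j) \<in> S" using \<open>(i', snd c) \<in> S\<close> c ij by auto
      ultimately have "T (i', j) < T (i, j)" by (intro col)
      thus False using c ij pos[OF \<open>(i', j) \<in> S\<close>] by simp
    qed
  qed
  with c show ?thesis by blast
qed

lemma card_fixed_one:
  assumes fin: "finite S" and mc: "minb S c"
  shows "card {T \<in> syt S. T c = 1} = card (syt (S - {c}))"
proof -
  define n where "n = card S"
  have cS: "c \<in> S" using mc by (simp add: minb_def)
  have n1: "n \<ge> 1" using fin cS unfolding n_def by (metis One_nat_def Suc_leI card_gt_0_iff empty_iff)
  have cD: "card (S - {c}) = n - 1" using fin cS unfolding n_def by simp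
  define \<phi> where "\<phi> T = (\<lambda>b. if b \<in> S - {c} then T b - 1 else (0::nat))" for T :: "nat \<times> nat \<Rightarrow> nat"
  define \<psi> where "\<psi> T = (\<lambda>b. if b = c then 1 else if b \<in> S then T b + 1 else (0::nat))" for T :: "nat \<times> nat \<Rightarrow> nat"
  show ?thesis
  proof (rule bij_betw_same_card[of \<phi>], rule bij_betw_byWitness[where f' = \<psi>])
    show "\<forall>T\<in>{T \<in> syt S. T c = 1}. \<psi> (\<phi> T) = T"
    proof
      fix T assume T: "T \<in> {T \<in> syt S. T c = 1}"
      hence bij: "bij_betw T S {1..n}" and z: "\<forall>b. b \<notin> S \<longrightarrow> T b = 0" and T1: "T c = 1"
        by (auto simp: syt_def n_def)
      have pos: "\<And>b. b \<in> S \<Longrightarrow> T b \<ge> 1" using bij by (auto simp: bij_betw_def)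
      show "\<psi> (\<phi> T) = T"
      proof
        fix b show "\<psi> (\<phi> T) b = T b"
          using T1 z[rule_format, of b] pos[of b] cS by (auto simp: \<psi>_def \<phi>_def)
      qed
    qed
    show "\<forall>T\<in>syt (S - {c}). \<phi> (\<psi> T) = T"
    proof
      fix T assume T: "T \<in> syt (S - {c})"
      hence z: "\<forall>b. b \<notin> S - {c} \<longrightarrow> T b = 0" by (auto simp: syt_def)
      show "\<phi> (\<psi> T) = T"
      proof
        fix b show "\<phi> (\<psi> T) b = T b"
          using z[rule_format, of b] by (auto simp: \<psi>_def \<phi>_def)
      qed
    qed
    show "\<phi> ` {T \<in> syt S. T c = 1} \<subseteq> syt (S - {c})"
    proof
      fix T' assume "T' \<in> \<phi> ` {T \<in> syt S. T c = 1}"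
      then obtain T where T: "T \<in> syt S" "T c = 1" and T': "T' = \<phi> T" by auto
      have bij: "bij_betw T S {1..n}" and z: "\<forall>b. b \<notin> S \<longrightarrow> T b = 0"
        and row: "\<forall>i j j'. (i, j) \<in> S \<and> (i, j') \<in> S \<and> j < j' \<longrightarrow> T (i, j) < T (i, j')"
        and col: "\<forall>i i' j. (i, j) \<in> S \<and> (i', j) \<in> S \<and> i < i' \<longrightarrow> T (i, j) < T (i', j)"
        using T by (auto simp: syt_def n_def)
      have inj: "inj_on T S" and img: "T ` S = {1..n}" using bij by (auto simp: bij_betw_def)
      have pos: "\<And>b. b \<in> S \<Longrightarrow> T b \<ge> 1" using img by auto
      have ne1: "T b \<noteq> 1" if b: "b \<in> S - {c}" for b
      proof
        assume "T b = 1"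
        hence "T b = T c" using T(2) by simp
        hence "b = c" using inj b cS by (auto dest: inj_onD)
        thus False using b by simp
      qed
      have "bij_betw T' (S - {c}) {1..n - 1}"
        unfolding bij_betw_def
      proof
        show "inj_on T' (S - {c})"
          unfolding inj_on_def T' \<phi>_def
        proof (intro ballI impI)
          fix x y assume x: "x \<in> S - {c}" and y: "y \<in> S - {c}"
            and e: "(if x \<in> S - {c} then T x - 1 else 0) = (if y \<in> S - {c} then T y - 1 else 0)"
          have "T x = T y" using e x y pos[of x] pos[of y] by auto
          thus "x = y" using inj x y by (auto simp: inj_on_def)
        qed
        show "T' ` (S - {c}) = {1..n - 1}"
        proof
          show "T' ` (S - {c}) \<subseteq> {1..n - 1}"
          proof
            fix y assume "y \<in> T' ` (S - {c})"
            then obtain b where b: "b \<in> S - {c}" "y = T' b" by auto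
            have "T b \<in> {1..n}" using img b by auto
            thus "y \<in> {1..n - 1}" using ne1[OF b(1)] b by (auto simp: T' \<phi>_def)
          qed
          show "{1..n - 1} \<subseteq> T' ` (S - {c})"
          proof
            fix y assume y: "y \<in> {1..n - 1}"
            hence "y + 1 \<in> T ` S" using img by auto
            then obtain b where b0: "y + 1 = T b" "b \<in> S" by (rule imageE)
            hence b: "b \<in> S" "T b = y + 1" by simp_all
            have "b \<noteq> c" using b y T(2) by auto
            hence "T' b = y" using b by (simp add: T' \<phi>_def)
            thus "y \<in> T' ` (S - {c})" using b \<open>b \<noteq> c\<close> by blast
          qed
        qed
      qed
      moreover have "\<forall>b. b \<notin> S - {c} \<longrightarrow> T' b = 0" by (simp add: T' \<phi>_def)
      moreover have "\<forall>i j j'. (i, j) \<in> S - {c} \<and> (i, j') \<in> S - {c} \<and> j < j' \<longrightarrow> T' (i, j) < T' (i, j')"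
      proof (intro allI impI)
        fix i j j' assume a: "(i, j) \<in> S - {c} \<and> (i, j') \<in> S - {c} \<and> j < j'"
        hence "T (i, j) < T (i, j')" using row by auto
        thus "T' (i, j) < T' (i, j')" using a pos[of "(i,j)"] by (simp add: T' \<phi>_def)
      qed
      moreover have "\<forall>i i' j. (i, j) \<in> S - {c} \<and> (i', j) \<in> S - {c} \<and> i < i' \<longrightarrow> T' (i, j) < T' (i', j)"
      proof (intro allI impI)
        fix i i' j assume a: "(i, j) \<in> S - {c} \<and> (i', j) \<in> S - {c} \<and> i < i'"
        hence "T (i, j) < T (i', j)" using col by auto
        thus "T' (i, j) < T' (i', j)" using a pos[of "(i,j)"] by (simp add: T' \<phi>_def)
      qed
      ultimately show "T' \<in> syt (S - {c})" unfolding syt_def cD by blast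
    qed
    show "\<psi> ` syt (S - {c}) \<subseteq> {T \<in> syt S. T c = 1}"
    proof
      fix T' assume "T' \<in> \<psi> ` syt (S - {c})"
      then obtain T where T: "T \<in> syt (S - {c})" and T': "T' = \<psi> T" by auto
      have bij: "bij_betw T (S - {c}) {1..n - 1}" and z: "\<forall>b. b \<notin> S - {c} \<longrightarrow> T b = 0"
        and row: "\<forall>i j j'. (i, j) \<in> S - {c} \<and> (i, j') \<in> S - {c} \<and> j < j' \<longrightarrow> T (i, j) < T (i, j')"
        and col: "\<forall>i i' j. (i, j) \<in> S - {c} \<and> (i', j) \<in> S - {c} \<and> i < i' \<longrightarrow> T (i, j) < T (i', j)"
        using T by (auto simp: syt_def cD)
      have inj: "inj_on T (S - {c})" and img: "T ` (S - {c}) = {1..n - 1}" using bij by (auto simp: bij_betw_def)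
      have Tc: "T' c = 1" by (simp add: T' \<psi>_def)
      have pos2: "T b \<ge> 1" if b: "b \<in> S - {c}" for b
      proof -
        have "T b \<in> T ` (S - {c})" using b by (rule imageI)
        thus ?thesis unfolding img by simp
      qed
      have "bij_betw T' S {1..n}"
        unfolding bij_betw_def
      proof
        show "inj_on T' S"
          unfolding inj_on_def
        proof (intro ballI impI)
          fix x y assume x: "x \<in> S" and y: "y \<in> S" and e: "T' x = T' y"
          show "x = y"
          proof (cases "x = c \<or> y = c")
            case True
            have Tv: "\<And>b. b \<in> S - {c} \<Longrightarrow> T' b = T b + 1" by (simp add: T' \<psi>_def)
            show ?thesis
            proof (rule ccontr)
              assume "x \<noteq> y"
              with True have "(x = c \<and> y \<in> S - {c}) \<or> (y = c \<and> x \<in> S - {c})" using x y by auto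
              thus False
              proof
                assume a: "x = c \<and> y \<in> S - {c}"
                have "T' y \<ge> 2" using Tv[of y] pos2[of y] a by simp
                thus False using e a Tc by simp
              next
                assume a: "y = c \<and> x \<in> S - {c}"
                have "T' x \<ge> 2" using Tv[of x] pos2[of x] a by simp
                thus False using e a Tc by simp
              qed
            qed
          next
            case False
            hence "T x = T y" using e x y by (simp add: T' \<psi>_def)
            thus ?thesis using inj x y False by (auto simp: inj_on_def)
          qed
        qed
        show "T' ` S = {1..n}"
        proof
          show "T' ` S \<subseteq> {1..n}"
          proof
            fix y assume "y \<in> T' ` S"
            then obtain b where b: "b \<in> S" "y = T' b" by auto
            show "y \<in> {1..n}"
            proof (cases "b = c")
              case True then show ?thesis using b n1 by (simp add: T' \<psi>_def)
            next
              case False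
              hence "T b \<in> {1..n - 1}" using img b by auto
              thus ?thesis using b False by (auto simp: T' \<psi>_def)
            qed
          qed
          show "{1..n} \<subseteq> T' ` S"
          proof
            fix y assume y: "y \<in> {1..n}"
            show "y \<in> T' ` S"
            proof (cases "y = 1")
              case True then show ?thesis using Tc cS by (metis image_eqI)
            next
              case False
              hence "y - 1 \<in> T ` (S - {c})" using img y by auto
              then obtain b where b0: "y - 1 = T b" "b \<in> S - {c}" by (rule imageE)
              hence b: "b \<in> S - {c}" "T b = y - 1" by simp_all
              hence "T' b = y" using False y by (simp add: T' \<psi>_def)
              thus ?thesis using b by blast
            qed
          qed
        qed
      qed
      moreover have "\<forall>b. b \<notin> S \<longrightarrow> T' b = 0" using cS by (simp add: T' \<psi>_def)
      moreover have "\<forall>i j j'. (i, j) \<in> S \<and> (i, j') \<in> S \<and> j < j' \<longrightarrow> T' (i, j) < T' (i, j')"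
      proof (intro allI impI)
        fix i j j' assume a: "(i, j) \<in> S \<and> (i, j') \<in> S \<and> j < j'"
        show "T' (i, j) < T' (i, j')"
        proof (cases "(i, j') = c")
          case True
          with mc a show ?thesis by (auto simp: minb_def)
        next
          case False
          show ?thesis
          proof (cases "(i, j) = c")
            case True then show ?thesis using False a pos2[of "(i, j')"] by (simp add: T' \<psi>_def)
          next
            case False2: False
            hence "T (i, j) < T (i, j')" using row a False by auto
            thus ?thesis using a False False2 by (simp add: T' \<psi>_def)
          qed
        qed
      qed
      moreover have "\<forall>i i' j. (i, j) \<in> S \<and> (i', j) \<in> S \<and> i < i' \<longrightarrow> T' (i, j) < T' (i', j)"
      proof (intro allI impI)
        fix i i' j assume a: "(i, j) \<in> S \<and> (i', j) \<in> S \<and> i < i'"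
        show "T' (i, j) < T' (i', j)"
        proof (cases "(i', j) = c")
          case True
          with mc a show ?thesis by (auto simp: minb_def)
        next
          case False
          show ?thesis
          proof (cases "(i, j) = c")
            case True then show ?thesis using False a pos2[of "(i', j)"] by (simp add: T' \<psi>_def)
          next
            case False2: False
            hence "T (i, j) < T (i', j)" using col a False by auto
            thus ?thesis using a False False2 by (simp add: T' \<psi>_def)
          qed
        qed
      qed
      ultimately have "T' \<in> syt S" unfolding syt_def n_def by blast
      with Tc show "T' \<in> {T \<in> syt S. T c = 1}" by blast
    qed
  qed
qed

lemma syt_decomp:
  assumes fin: "finite S" and ne: "S \<noteq> {}"
  shows "card (syt S) = (\<Sum>c\<in>{c. minb S c}. card (syt (S - {c})))"
proof -
  have eq: "syt S = (\<Union>c\<in>{c. minb S c}. {T \<in> syt S. T c = 1})"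
    using syt_one_exists[OF _ fin ne] by blast
  have "{c. minb S c} \<subseteq> S" unfolding minb_def by blast
  hence finI: "finite {c. minb S c}" using fin by (rule finite_subset)
  have "card (syt S) = card (\<Union>c\<in>{c. minb S c}. {T \<in> syt S. T c = 1})"
    using arg_cong[OF eq, of card] .
  also have "\<dots> = (\<Sum>c\<in>{c. minb S c}. card {T \<in> syt S. T c = 1})"
  proof (rule card_UN_disjoint[OF finI])
    show "\<forall>c\<in>{c. minb S c}. finite {T \<in> syt S. T c = 1}" using syt_finite[OF fin] by simp
    show "\<forall>c\<in>{c. minb S c}. \<forall>c'\<in>{c. minb S c}. c \<noteq> c' \<longrightarrow> {T \<in> syt S. T c = 1} \<inter> {T \<in> syt S. T c' = 1} = {}"
    proof (intro ballI impI)
      fix c c' assume c: "c \<in> {c. minb S c}" and c': "c' \<in> {c. minb S c}" and ne: "c \<noteq> c'"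
      show "{T \<in> syt S. T c = 1} \<inter> {T \<in> syt S. T c' = 1} = {}"
      proof (rule ccontr)
        assume "{T \<in> syt S. T c = 1} \<inter> {T \<in> syt S. T c' = 1} \<noteq> {}"
        then obtain T where T: "T \<in> syt S" "T c = 1" "T c' = 1" by auto
        hence "inj_on T S" by (simp add: syt_def bij_betw_def)
        thus False using T c c' ne by (auto simp: minb_def inj_on_def)
      qed
    qed
  qed
  also have "\<dots> = (\<Sum>c\<in>{c. minb S c}. card (syt (S - {c})))"
    by (rule sum.cong[OF refl], rule card_fixed_one[OF fin], simp)
  finally show ?thesis .
qed


definition GG :: "nat \<Rightarrow> nat \<Rightarrow> nat \<Rightarrow> int" where
  "GG m a b = Lm m (r2_poly (Suc b) (Suc a))"

lemma GG0: "GG 0 a b = 1" by (simp add: GG_def Lm_r2)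

lemma GG_step: "GG (Suc m) a b = GG m (Suc a) b + (if a = 0 then 0 else GG m (a - 1) (Suc b))
   + (if b = 0 then 0 else GG m a (b - 1))"
proof -
  have e1: "r2_poly (Suc (Suc b)) a = (if a = 0 then 0 else r2_poly (Suc (Suc b)) (Suc (a - 1)))"
    by (cases a) (simp_all add: r2_zero1)
  have e2: "r2_poly b (Suc a) = (if b = 0 then 0 else r2_poly (Suc (b - 1)) (Suc a))"
    by (cases b) (simp_all add: r2_zero2)
  have "GG (Suc m) a b = Lm m (xX * r2_poly (Suc b) (Suc a))" by (simp add: GG_def Lm_X)
  also have "\<dots> = Lm m (r2_poly (Suc b) (Suc (Suc a))) + Lm m (r2_poly (Suc (Suc b)) a) + Lm m (r2_poly b (Suc a))"
    unfolding r2_rec by (simp add: Lm_add)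
  also have "\<dots> = GG m (Suc a) b + (if a = 0 then 0 else GG m (a - 1) (Suc b))
   + (if b = 0 then 0 else GG m a (b - 1))"
    by (subst e1, subst e2) (simp add: GG_def Lm_zero)
  finally show ?thesis .
qed

fun sk :: "nat \<times> nat \<times> nat \<Rightarrow> nat \<times> nat \<times> nat \<Rightarrow> (nat \<times> nat) set" where
  "sk (l1, l2, l3) (m1, m2, m3) = {(i, j). (i = 0 \<and> m1 \<le> j \<and> j < l1) \<or> (i = Suc 0 \<and> m2 \<le> j \<and> j < l2) \<or> (i = 2 \<and> m3 \<le> j \<and> j < l3)}"

fun Lam :: "nat \<times> nat \<times> nat \<Rightarrow> nat \<Rightarrow> (nat \<times> nat \<times> nat) set" where
  "Lam (m1, m2, m3) m = {(l1, l2, l3). l2 \<le> l1 \<and> l3 \<le> l2 \<and> m1 \<le> l1 \<and> m2 \<le> l2 \<and> m3 \<le> l3 \<and> l1 + l2 + l3 = m1 + m2 + m3 + m}"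

definition F3 :: "nat \<times> nat \<times> nat \<Rightarrow> nat \<Rightarrow> nat" where
  "F3 M m = (\<Sum>L\<in>Lam M m. card (syt (sk L M)))"

lemma sk_finite: "finite (sk (l1, l2, l3) M)"
proof -
  obtain m1 m2 m3 where M: "M = (m1, m2, m3)" by (cases M) auto
  have "sk (l1, l2, l3) M \<subseteq> {..2} \<times> {..<l1 + l2 + l3}" unfolding M by auto
  thus ?thesis by (rule finite_subset) simp
qed

lemma Lam_finite: "finite (Lam (m1, m2, m3) m)"
proof -
  let ?N = "m1 + m2 + m3 + m"
  have "Lam (m1, m2, m3) m \<subseteq> {..?N} \<times> {..?N} \<times> {..?N}" by auto
  thus ?thesis by (rule finite_subset) simp
qed

lemma sk_min:
  assumes "l2 \<le> l1" "l3 \<le> l2" "m2 \<le> m1" "m3 \<le> m2" "m1 \<le> l1" "m2 \<le> l2" "m3 \<le> l3"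
  shows "{c. minb (sk (l1, l2, l3) (m1, m2, m3)) c} =
    (if m1 < l1 then {(0, m1)} else {}) \<union> (if m2 < l2 \<and> m2 < m1 then {(Suc 0, m2)} else {})
    \<union> (if m3 < l3 \<and> m3 < m2 then {(2, m3)} else {})"
  using assms unfolding minb_def by (auto; force)

lemma sk_del:
  "sk (l1, l2, l3) (m1, m2, m3) - {(0, m1)} = sk (l1, l2, l3) (Suc m1, m2, m3)"
  "sk (l1, l2, l3) (m1, m2, m3) - {(Suc 0, m2)} = sk (l1, l2, l3) (m1, Suc m2, m3)"
  "sk (l1, l2, l3) (m1, m2, m3) - {(2, m3)} = sk (l1, l2, l3) (m1, m2, Suc m3)"
  by auto

lemma sum3: assumes "x \<noteq> y" "x \<noteq> z" "y \<noteq> z"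
  shows "sum f ((if P then {x} else {}) \<union> (if Q then {y} else {}) \<union> (if R then {z} else {}))
    = (if P then f x else 0) + (if Q then f y else 0) + (if R then f z else (0::nat))"
  using assms by (cases P; cases Q; cases R) auto

lemma card_step:
  assumes L: "(l1, l2, l3) \<in> Lam (m1, m2, m3) (Suc m)" and M: "m2 \<le> m1" "m3 \<le> m2"
  shows "card (syt (sk (l1, l2, l3) (m1, m2, m3))) =
     (if m1 < l1 then card (syt (sk (l1, l2, l3) (Suc m1, m2, m3))) else 0)
   + (if m2 < l2 \<and> m2 < m1 then card (syt (sk (l1, l2, l3) (m1, Suc m2, m3))) else 0)
   + (if m3 < l3 \<and> m3 < m2 then card (syt (sk (l1, l2, l3) (m1, m2, Suc m3))) else 0)"
proof -
  have c: "l2 \<le> l1" "l3 \<le> l2" "m1 \<le> l1" "m2 \<le> l2" "m3 \<le> l3" "l1 + l2 + l3 = m1 + m2 + m3 + Suc m"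
    using L by auto
  have ne: "sk (l1, l2, l3) (m1, m2, m3) \<noteq> {}"
  proof (cases "m1 < l1")
    case True then have "(0, m1) \<in> sk (l1, l2, l3) (m1, m2, m3)" by simp
    then show ?thesis by blast
  next
    case False
    show ?thesis
    proof (cases "m2 < l2")
      case True then have "(1, m2) \<in> sk (l1, l2, l3) (m1, m2, m3)" by simp
      then show ?thesis by blast
    next
      case False2: False
      have "m3 < l3" using c False False2 by linarith
      then have "(2, m3) \<in> sk (l1, l2, l3) (m1, m2, m3)" by simp
      then show ?thesis by blast
    qed
  qed
  show ?thesis
    unfolding syt_decomp[OF sk_finite ne] sk_min[OF c(1,2) M c(3,4,5)]
    by (subst sum3) (simp_all del: sk.simps add: sk_del)
qed

lemma Lam0: assumes "m2 \<le> m1" "m3 \<le> m2" shows "Lam (m1, m2, m3) 0 = {(m1, m2, m3)}"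
  using assms by auto

lemma F3_0: assumes "m2 \<le> m1" "m3 \<le> m2" shows "F3 (m1, m2, m3) 0 = 1"
proof -
  have "sk (m1, m2, m3) (m1, m2, m3) = {}" by auto
  then show ?thesis unfolding F3_def Lam0[OF assms] by (simp del: sk.simps add: card_syt_empty)
qed

lemma F3_step: assumes M: "m2 \<le> m1" "m3 \<le> m2"
  shows "F3 (m1, m2, m3) (Suc m) = F3 (Suc m1, m2, m3) m + (if m2 < m1 then F3 (m1, Suc m2, m3) m else 0)
     + (if m3 < m2 then F3 (m1, m2, Suc m3) m else 0)"
proof -
  let ?A = "Lam (m1, m2, m3) (Suc m)"
  define g1 where "g1 = (\<lambda>(l1, l2, l3). if m1 < l1 then card (syt (sk (l1, l2, l3) (Suc m1, m2, m3))) else 0)"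
  define g2 where "g2 = (\<lambda>(l1, l2, l3). if m2 < l2 then card (syt (sk (l1, l2, l3) (m1, Suc m2, m3))) else 0)"
  define g3 where "g3 = (\<lambda>(l1, l2, l3). if m3 < l3 then card (syt (sk (l1, l2, l3) (m1, m2, Suc m3))) else 0)"
  have "F3 (m1, m2, m3) (Suc m) = (\<Sum>L\<in>?A. g1 L + (if m2 < m1 then g2 L else 0) + (if m3 < m2 then g3 L else 0))"
    unfolding F3_def
  proof (rule sum.cong[OF refl])
    fix L assume L: "L \<in> ?A"
    obtain l1 l2 l3 where Le: "L = (l1, l2, l3)" by (cases L) auto
    show "card (syt (sk L (m1, m2, m3))) = g1 L + (if m2 < m1 then g2 L else 0) + (if m3 < m2 then g3 L else 0)"
      unfolding Le card_step[OF L[unfolded Le] M] g1_def g2_def g3_def by auto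
  qed
  also have "\<dots> = sum g1 ?A + (if m2 < m1 then sum g2 ?A else 0) + (if m3 < m2 then sum g3 ?A else 0)"
    by (simp add: sum.distrib)
  also have "sum g1 ?A = F3 (Suc m1, m2, m3) m"
  proof -
    have "sum g1 ?A = (\<Sum>L\<in>{L\<in>?A. m1 < fst L}. card (syt (sk L (Suc m1, m2, m3))))"
      by (subst sum.inter_filter[OF Lam_finite]) (auto simp: g1_def intro!: sum.cong)
    also have "{L\<in>?A. m1 < fst L} = Lam (Suc m1, m2, m3) m" by auto
    finally show ?thesis by (simp add: F3_def)
  qed
  also have "sum g2 ?A = F3 (m1, Suc m2, m3) m"
  proof -
    have "sum g2 ?A = (\<Sum>L\<in>{L\<in>?A. m2 < fst (snd L)}. card (syt (sk L (m1, Suc m2, m3))))"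
      by (subst sum.inter_filter[OF Lam_finite]) (auto simp: g2_def intro!: sum.cong)
    also have "{L\<in>?A. m2 < fst (snd L)} = Lam (m1, Suc m2, m3) m" by auto
    finally show ?thesis by (simp add: F3_def)
  qed
  also have "sum g3 ?A = F3 (m1, m2, Suc m3) m"
  proof -
    have "sum g3 ?A = (\<Sum>L\<in>{L\<in>?A. m3 < snd (snd L)}. card (syt (sk L (m1, m2, Suc m3))))"
      by (subst sum.inter_filter[OF Lam_finite]) (auto simp: g3_def intro!: sum.cong)
    also have "{L\<in>?A. m3 < snd (snd L)} = Lam (m1, m2, Suc m3) m" by auto
    finally show ?thesis by (simp add: F3_def)
  qed
  finally show ?thesis .
qed

lemma F3_GG: "m2 \<le> m1 \<Longrightarrow> m3 \<le> m2 \<Longrightarrow> int (F3 (m1, m2, m3) m) = GG m (m1 - m2) (m2 - m3)"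
proof (induction m arbitrary: m1 m2 m3)
  case 0 then show ?case by (simp add: F3_0 GG0)
next
  case (Suc m)
  have a: "int (F3 (Suc m1, m2, m3) m) = GG m (Suc (m1 - m2)) (m2 - m3)"
    using Suc.IH[of m2 "Suc m1" m3] Suc.prems by (simp add: Suc_diff_le)
  have b: "m2 < m1 \<Longrightarrow> int (F3 (m1, Suc m2, m3) m) = GG m (m1 - m2 - 1) (Suc (m2 - m3))"
    using Suc.IH[of "Suc m2" m1 m3] Suc.prems by (simp add: Suc_diff_le)
  have c: "m3 < m2 \<Longrightarrow> int (F3 (m1, m2, Suc m3) m) = GG m (m1 - m2) (m2 - m3 - 1)"
    using Suc.IH[of m2 m1 "Suc m3"] Suc.prems by simp
  show ?case
    unfolding F3_step[OF Suc.prems] GG_step using a b c Suc.prems by auto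
qed


definition tri :: "nat list \<Rightarrow> nat \<times> nat \<times> nat" where
  "tri lam = (lam ! 0, lam ! 1, if length lam \<ge> 3 then lam ! 2 else 0)"

definition untri :: "nat \<times> nat \<times> nat \<Rightarrow> nat list" where
  "untri L = (case L of (a, b, c) \<Rightarrow> if c = 0 then [a, b] else [a, b, c])"

lemma list_23:
  assumes "2 \<le> length lam" "length lam \<le> 3"
  shows "(\<exists>a b. lam = [a, b]) \<or> (\<exists>a b c. lam = [a, b, c])"
proof -
  obtain x y zs where l: "lam = x # y # zs" using assms(1)
    by (metis One_nat_def Suc_1 Suc_le_length_iff)
  have "length zs \<le> 1" using assms(2) l by simp
  hence "zs = [] \<or> (\<exists>z. zs = [z])" by (cases zs) auto
  thus ?thesis using l by auto
qed

lemma skew2: "skew_diagram [a, b] [mu1, mu2] = sk (a, b, 0) (mu1, mu2, 0)"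
  unfolding skew_diagram_def young_diagram_def by (auto simp: less_Suc_eq numeral_2_eq_2)

lemma skew3: "skew_diagram [a, b, c] [mu1, mu2] = sk (a, b, c) (mu1, mu2, 0)"
  unfolding skew_diagram_def young_diagram_def by (auto simp: less_Suc_eq numeral_2_eq_2 numeral_3_eq_3)

lemma lhs_F3:
  assumes "0 < mu2" "mu2 \<le> mu1" "mu1 + mu2 \<le> n"
  shows "(\<Sum>lam\<in>{lam. is_partition lam n \<and> length lam \<le> 3 \<and> part_contains lam [mu1, mu2]}.
              card (skew_SYT lam [mu1, mu2])) = F3 (mu1, mu2, 0) (n - (mu1 + mu2))"
  unfolding F3_def
proof (rule sum.reindex_bij_witness[where j = tri and i = untri])
  fix lam assume "lam \<in> {lam. is_partition lam n \<and> length lam \<le> 3 \<and> part_contains lam [mu1, mu2]}"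
  hence l: "is_partition lam n" "length lam \<le> 3" "part_contains lam [mu1, mu2]" by auto
  have "2 \<le> length lam" using l(3) by (simp add: part_contains_def)
  from list_23[OF this l(2)] have cases: "(\<exists>a b. lam = [a, b]) \<or> (\<exists>a b c. lam = [a, b, c])" .
  show "untri (tri lam) = lam"
    using cases l(1) by (auto simp: tri_def untri_def is_partition_def)
  show "tri lam \<in> Lam (mu1, mu2, 0) (n - (mu1 + mu2))"
    using cases l(1) l(3) assms by (auto simp: tri_def is_partition_def part_contains_def)
  show "card (syt (sk (tri lam) (mu1, mu2, 0))) = card (skew_SYT lam [mu1, mu2])"
    using cases by (auto simp: tri_def skew_SYT_syt skew2 skew3)
next
  fix L assume L: "L \<in> Lam (mu1, mu2, 0) (n - (mu1 + mu2))"
  obtain a b c where Le: "L = (a, b, c)" by (cases L) auto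
  have c: "b \<le> a" "c \<le> b" "mu1 \<le> a" "mu2 \<le> b" "a + b + c = n" using L Le assms by auto
  show "tri (untri L) = L" unfolding Le by (simp add: tri_def untri_def)
  show "untri L \<in> {lam. is_partition lam n \<and> length lam \<le> 3 \<and> part_contains lam [mu1, mu2]}"
    using c assms unfolding Le by (auto simp: untri_def is_partition_def part_contains_def nth_Cons')
qed

theorem theorem2p2:
  fixes mu1 mu2 n :: nat
  assumes "0 < mu2" and "mu2 \<le> mu1" and "mu1 + mu2 \<le> n"
  shows "int (\<Sum>lam\<in>{lam. is_partition lam n \<and> length lam \<le> 3 \<and> part_contains lam [mu1, mu2]}.
              card (skew_SYT lam [mu1, mu2]))
       = (\<Sum>i\<le>degree (r2_poly (mu2 + 1) (mu1 - mu2 + 1)).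
              coeff (r2_poly (mu2 + 1) (mu1 - mu2 + 1)) i * int (motzkin (i + n - (mu1 + mu2))))"
proof -
  define m where "m = n - (mu1 + mu2)"
  have "int (\<Sum>lam\<in>{lam. is_partition lam n \<and> length lam \<le> 3 \<and> part_contains lam [mu1, mu2]}.
              card (skew_SYT lam [mu1, mu2])) = int (F3 (mu1, mu2, 0) m)"
    unfolding m_def using lhs_F3[OF assms] by simp
  also have "\<dots> = GG m (mu1 - mu2) mu2" using F3_GG[of mu2 mu1 0 m] assms by simp
  also have "\<dots> = (\<Sum>i\<le>degree (r2_poly (mu2 + 1) (mu1 - mu2 + 1)).
              coeff (r2_poly (mu2 + 1) (mu1 - mu2 + 1)) i * int (motzkin (i + n - (mu1 + mu2))))"
  proof -
    have "\<And>i. i + n - (mu1 + mu2) = i + m" unfolding m_def using assms by simp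
    thus ?thesis unfolding GG_def Lm_def by simp
  qed
  finally show ?thesis .
qed


end
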